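(* Let $n\ge1$, $p<0$, let $\mathcal{S}$ be a discrete subgroup of $O(n+1)$ satisfying the spanning property, and let $f$ be a positive $\mathcal{S}$-invariant function on $\mathbb{S}^n$ with $c_1\le f\le c_2$. There is a constant $C_n(\mathcal{S})>0$ depending only on $n$ and $\mathcal{S}$ such that for every $\Omega\in\mathcal{K}_p(\mathcal{S})$, $$h_\Omega(x)\le C_n(\mathcal{S})\qquad\forall x\in\mathbb{S}^n.$$
   Context: $\mathcal{K}_p(\mathcal{S})=\{\Omega\in\mathcal{K}_0(\mathcal{S}):\int_{\mathbb{S}^n}fh_\Omega^p=\int_{\mathbb{S}^n}f\}$, where $\mathcal{K}_0(\mathcal{S})$ is the set of convex bodies in $\mathbb{R}^{n+1}$ containing the origin and invariant under all $\phi\in\mathcal{S}$, and $h_\Omega$ is the support function. Spanning property: for every $a\in\mathbb{S}^n$, $\mathrm{conv}\{\phi(a):\phi\in\mathcal{S}\}$ is a non-degenerate $(n+1)$-dimensional polytope. *)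

theory Defs
  imports "HOL-Analysis.Analysis"
begin

text \<open>Ambient space R^(n+1) is real^'n with CARD('n) = n+1; orthogonal maps are
  orthogonal matrices acting by matrix-vector multiplication.\<close>

definition discrete_subgroup_O :: "(real^'n^'n) set \<Rightarrow> bool" where
  "discrete_subgroup_O S \<longleftrightarrow>
     (\<forall>A\<in>S. orthogonal_matrix A) \<and>
     mat 1 \<in> S \<and>
     (\<forall>A\<in>S. \<forall>B\<in>S. A ** B \<in> S) \<and>
     (\<forall>A\<in>S. matrix_inv A \<in> S) \<and>
     (\<forall>A\<in>S. \<exists>e>0. \<forall>B\<in>S. dist B A < e \<longrightarrow> B = A)"

definition spanning_property :: "(real^'n^'n) set \<Rightarrow> bool" where
  "spanning_property S \<longleftrightarrow>
     (\<forall>a\<in>sphere (0::real^'n) 1.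
        polytope (convex hull ((\<lambda>\<phi>. \<phi> *v a) ` S)) \<and>
        aff_dim (convex hull ((\<lambda>\<phi>. \<phi> *v a) ` S)) = int CARD('n))"

definition convex_body :: "'a::euclidean_space set \<Rightarrow> bool" where
  "convex_body K \<longleftrightarrow> compact K \<and> convex K \<and> interior K \<noteq> {}"

definition support_fun :: "'a::euclidean_space set \<Rightarrow> 'a \<Rightarrow> real" where
  "support_fun K x = (SUP y\<in>K. x \<bullet> y)"

definition K0 :: "(real^'n^'n) set \<Rightarrow> (real^'n) set set" where
  "K0 S = {\<Omega>. convex_body \<Omega> \<and> 0 \<in> \<Omega> \<and> (\<forall>\<phi>\<in>S. (\<lambda>x. \<phi> *v x) ` \<Omega> = \<Omega>)}"

text \<open>A measure on the unit sphere proportional to its surface measure (cone measure: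
  push-forward of Lebesgue measure on the punctured unit ball under radial projection).
  The defining equation of K_p is homogeneous in the measure, so the constant is irrelevant.\<close>
definition sphere_measure :: "('a::euclidean_space) measure" where
  "sphere_measure = distr (restrict_space lborel (ball 0 1 - {0}))
                          (restrict_space borel (sphere 0 1)) (\<lambda>x. x /\<^sub>R norm x)"

text \<open>h^p for p<0, with the convention 0^p = \<infinity>.\<close>
definition pow_neg :: "real \<Rightarrow> real \<Rightarrow> ennreal" where
  "pow_neg p t = (if t = 0 then \<infinity> else ennreal (t powr p))"

definition Kp :: "(real^'n^'n) set \<Rightarrow> (real^'n \<Rightarrow> real) \<Rightarrow> real \<Rightarrow> (real^'n) set set" where
  "Kp S f p = {\<Omega>\<in>K0 S.
     (\<integral>\<^sup>+ x. ennreal (f x) * pow_neg p (support_fun \<Omega> x) \<partial>sphere_measure)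
       = (\<integral>\<^sup>+ x. ennreal (f x) \<partial>sphere_measure)}"

end

theory Submission
  imports Defs
begin

lemma orth_ot:
  fixes A :: "real^'n^'n"
  assumes "orthogonal_matrix A"
  shows "orthogonal_transformation (\<lambda>x. A *v x)"
  using assms by (simp add: orthogonal_transformation_matrix matrix_vector_mul_linear)

lemma orth_norm:
  fixes A :: "real^'n^'n"
  assumes "orthogonal_matrix A"
  shows "norm (A *v x) = norm x"
  using orthogonal_transformation_norm[OF orth_ot[OF assms]] .

lemma orth_inj:
  fixes A :: "real^'n^'n"
  assumes "orthogonal_matrix A"
  shows "inj (\<lambda>x. A *v x)"
  using orthogonal_transformation_inj[OF orth_ot[OF assms]] .

lemma sphere_not_open_segment:
  fixes y :: "'a::euclidean_space"
  assumes "norm y = 1" "norm u \<le> 1" "norm v \<le> 1"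
  shows "y \<notin> open_segment u v"
proof
  assume "y \<in> open_segment u v"
  then obtain t where t: "u \<noteq> v" "0 < t" "t < 1" "y = (1 - t) *\<^sub>R u + t *\<^sub>R v"
    by (auto simp: in_segment)
  have yu: "y \<bullet> u \<le> 1" using norm_cauchy_schwarz[of y u] assms by (smt (verit) mult_left_le)
  have yv: "y \<bullet> v \<le> 1" using norm_cauchy_schwarz[of y v] assms by (smt (verit) mult_left_le)
  have "1 = y \<bullet> y" using assms(1) by (simp add: dot_square_norm)
  also have "\<dots> = (1 - t) * (y \<bullet> u) + t * (y \<bullet> v)"
    by (subst (2) t(4)) (simp add: inner_add_right)
  finally have e: "1 = (1 - t) * (y \<bullet> u) + t * (y \<bullet> v)" .
  have "y \<bullet> u = 1"
  proof (rule ccontr)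
    assume "y \<bullet> u \<noteq> 1" then have "y \<bullet> u < 1" using yu by simp
    then have "(1 - t) * (y \<bullet> u) < (1 - t)" using t by simp
    moreover have "t * (y \<bullet> v) \<le> t" using yv t by (simp add: mult_left_le)
    ultimately show False using e by linarith
  qed
  have "y \<bullet> v = 1"
  proof (rule ccontr)
    assume "y \<bullet> v \<noteq> 1" then have "y \<bullet> v < 1" using yv by simp
    then have "t * (y \<bullet> v) < t" using t by simp
    moreover have "(1 - t) * (y \<bullet> u) \<le> 1 - t" using yu t by (simp add: mult_left_le)
    ultimately show False using e by linarith
  qed
  have eq: "w = y" if "y \<bullet> w = 1" "norm w \<le> 1" for w
  proof -
    have "norm (y - w) ^ 2 = (y \<bullet> y) - 2 * (y \<bullet> w) + w \<bullet> w"
      by (simp add: power2_norm_eq_inner inner_diff_left inner_diff_right inner_commute)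
    also have "\<dots> = norm w ^ 2 - 1" using that assms(1) by (simp add: dot_square_norm)
    also have "\<dots> \<le> 0" using that(2) norm_ge_zero[of w]
      by (smt (verit) power_le_one)
    finally show ?thesis by simp
  qed
  have "u = y" "v = y" using eq \<open>y \<bullet> u = 1\<close> \<open>y \<bullet> v = 1\<close> assms by auto
  then show False using t(1) by simp
qed


lemma orbit_finite:
  fixes S :: "(real^'n^'n) set"
  assumes dS: "discrete_subgroup_O S" and sp: "spanning_property S" and a: "a \<in> sphere 0 1"
  shows "finite ((\<lambda>\<phi>. \<phi> *v a) ` S)"
proof -
  let ?O = "(\<lambda>\<phi>. \<phi> *v a) ` S"
  have poly: "polytope (convex hull ?O)" using sp a unfolding spanning_property_def by blast
  have fin: "finite {v. v extreme_point_of (convex hull ?O)}"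
    by (rule finite_polyhedron_extreme_points[OF polytope_imp_polyhedron[OF poly]])
  have nO: "norm y = 1" if yO: "y \<in> ?O" for y
  proof -
    obtain \<phi> where "\<phi> \<in> S" "y = \<phi> *v a" using yO by blast
    moreover have "orthogonal_matrix \<phi>" using dS \<open>\<phi> \<in> S\<close> unfolding discrete_subgroup_O_def by blast
    ultimately show ?thesis using orth_norm[of \<phi> a] a by simp
  qed
  have sub: "convex hull ?O \<subseteq> cball 0 1"
    by (rule hull_minimal) (use nO in auto)
  have "?O \<subseteq> {v. v extreme_point_of (convex hull ?O)}"
  proof
    fix y assume y: "y \<in> ?O"
    have "y \<notin> open_segment u v" if "u \<in> convex hull ?O" "v \<in> convex hull ?O" for u v
    proof -
      have "norm u \<le> 1" "norm v \<le> 1" using sub that by (auto simp: subset_iff)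
      then show ?thesis using sphere_not_open_segment[of y u v] nO[OF y] by blast
    qed
    then show "y \<in> {v. v extreme_point_of (convex hull ?O)}"
      using y by (auto simp: extreme_point_of_def hull_inc)
  qed
  then show ?thesis using fin finite_subset by blast
qed

lemma orbit_pos:
  fixes S :: "(real^'n^'n) set"
  assumes dS: "discrete_subgroup_O S" and sp: "spanning_property S"
    and a: "a \<in> sphere 0 1" and x: "x \<in> sphere 0 1"
  shows "\<exists>\<phi>\<in>S. x \<bullet> (\<phi> *v a) > 0"
proof (rule ccontr)
  assume neg: "\<not> ?thesis"
  let ?O = "(\<lambda>\<phi>. \<phi> *v a) ` S"
  have finO: "finite ?O" using orbit_finite[OF dS sp a] .
  have orth: "orthogonal_matrix \<psi>" if "\<psi> \<in> S" for \<psi> using that dS unfolding discrete_subgroup_O_def by blast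
  define v where "v = sum id ?O"
  have hfix: "\<psi> *v v = v" if "\<psi> \<in> S" for \<psi>
  proof -
    have im: "(\<lambda>y. \<psi> *v y) ` ?O \<subseteq> ?O"
    proof
      fix z assume "z \<in> (\<lambda>y. \<psi> *v y) ` ?O"
      then obtain \<phi> where "\<phi> \<in> S" "z = \<psi> *v (\<phi> *v a)" by auto
      moreover have "\<psi> ** \<phi> \<in> S" using that \<open>\<phi> \<in> S\<close> dS unfolding discrete_subgroup_O_def by blast
      ultimately show "z \<in> ?O" by (simp add: matrix_vector_mul_assoc)
    qed
    have inj: "inj_on (\<lambda>y. \<psi> *v y) ?O" using orth_inj[OF orth[OF that]] by (simp add: inj_on_def inj_def)
    have eq: "(\<lambda>y. \<psi> *v y) ` ?O = ?O" using endo_inj_surj[OF finO im inj] .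
    have "\<psi> *v v = sum (\<lambda>y. \<psi> *v y) ?O" unfolding v_def
      using real_vector.linear_sum[OF matrix_vector_mul_linear[of \<psi>]] by simp 
    also have "\<dots> = sum id ((\<lambda>y. \<psi> *v y) ` ?O)"
      by (subst sum.reindex[OF inj]) simp
    also have "\<dots> = v" using eq v_def by simp
    finally show ?thesis .
  qed
  have v0: "v = 0"
  proof (rule ccontr)
    assume "v \<noteq> 0"
    define b where "b = v /\<^sub>R norm v"
    have b: "b \<in> sphere 0 1" using \<open>v \<noteq> 0\<close> by (simp add: b_def)
    have "(\<lambda>\<phi>. \<phi> *v b) ` S = {b}"
    proof -
      have "\<phi> *v b = b" if "\<phi> \<in> S" for \<phi>
        using hfix[OF that] by (simp add: b_def linear.scaleR[OF matrix_vector_mul_linear[of \<phi>]])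
      moreover have "mat 1 \<in> S" using dS unfolding discrete_subgroup_O_def by blast
      ultimately show ?thesis by auto
    qed
    then have "aff_dim (convex hull ((\<lambda>\<phi>. \<phi> *v b) ` S)) = 0" by simp
    moreover have "aff_dim (convex hull ((\<lambda>\<phi>. \<phi> *v b) ` S)) = int CARD('n)"
      using sp b unfolding spanning_property_def by blast
    ultimately show False by simp
  qed
  have le: "x \<bullet> y \<le> 0" if "y \<in> ?O" for y using neg that by auto
  have "sum (\<lambda>y. x \<bullet> y) ?O = x \<bullet> v" unfolding v_def by (simp add: inner_sum_right)
  then have "sum (\<lambda>y. x \<bullet> y) ?O = 0" using v0 by simp
  then have s0: "sum (\<lambda>y. - (x \<bullet> y)) ?O = 0" by (simp add: sum_negf)
  have z: "x \<bullet> y = 0" if yO: "y \<in> ?O" for y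
  proof -
    have nn: "\<And>y. y \<in> ?O \<Longrightarrow> 0 \<le> - (x \<bullet> y)" using le by simp
    have "(sum (\<lambda>y. - (x \<bullet> y)) ?O = 0) = (\<forall>y\<in>?O. - (x \<bullet> y) = 0)"
      by (rule sum_nonneg_eq_0_iff[OF finO]) (rule nn)
    then have "\<forall>y\<in>?O. - (x \<bullet> y) = 0" using s0 by (rule iffD1)
    then show ?thesis using yO by fastforce
  qed
  have x0: "x \<noteq> 0" using x by auto
  have "convex hull ?O \<subseteq> {y. x \<bullet> y = 0}"
    by (rule hull_minimal) (use z convex_hyperplane in auto)
  then have "aff_dim (convex hull ?O) \<le> aff_dim {y. x \<bullet> y = 0}" by (rule aff_dim_subset)
  also have "\<dots> = int CARD('n) - 1" using x0 by simp
  finally have "aff_dim (convex hull ?O) \<le> int CARD('n) - 1" .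
  moreover have "aff_dim (convex hull ?O) = int CARD('n)" using sp a unfolding spanning_property_def by blast
  ultimately show False by linarith
qed


lemma uniform_pos:
  fixes S :: "(real^'n^'n) set"
  assumes dS: "discrete_subgroup_O S" and sp: "spanning_property S"
  shows "\<exists>r>0. \<forall>a\<in>sphere (0::real^'n) 1. \<forall>x\<in>sphere 0 1. \<exists>\<phi>\<in>S. r \<le> x \<bullet> (\<phi> *v a)"
proof -
  define U where "U = (\<lambda>(\<phi>::real^'n^'n, e::real). {p::(real^'n) \<times> (real^'n). e < snd p \<bullet> (\<phi> *v fst p)})"
  define C where "C = S \<times> {e::real. e > 0}"
  have cK: "compact (sphere (0::real^'n) 1 \<times> sphere (0::real^'n) 1)"
    by (intro compact_Times compact_sphere)
  have opn: "open (U c)" if "c \<in> C" for c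
  proof -
    obtain \<phi> e where c: "c = (\<phi>, e)" by fastforce
    have "open {p::(real^'n) \<times> (real^'n). e < snd p \<bullet> (\<phi> *v fst p)}"
    proof -
      have "continuous_on UNIV (\<lambda>x::(real^'n) \<times> (real^'n). \<phi> *v fst x)"
        by (rule bounded_linear.continuous_on[OF matrix_vector_mul_bounded_linear]) (intro continuous_intros)
      then show ?thesis by (intro open_Collect_less continuous_intros)
    qed
    then show ?thesis by (simp add: U_def c)
  qed
  have cov: "sphere 0 1 \<times> sphere 0 1 \<subseteq> (\<Union>c\<in>C. U c)"
  proof
    fix p :: "(real^'n) \<times> (real^'n)"
    assume "p \<in> sphere 0 1 \<times> sphere 0 1"
    then have "fst p \<in> sphere 0 1" "snd p \<in> sphere 0 1" by auto
    from orbit_pos[OF dS sp this] obtain \<phi> where \<phi>: "\<phi> \<in> S" "snd p \<bullet> (\<phi> *v fst p) > 0" by blast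
    define e where "e = snd p \<bullet> (\<phi> *v fst p) / 2"
    have "(\<phi>, e) \<in> C" using \<phi> by (simp add: C_def e_def)
    moreover have "p \<in> U (\<phi>, e)" using \<phi> by (simp add: U_def e_def)
    ultimately show "p \<in> (\<Union>c\<in>C. U c)" by blast
  qed
  obtain C' where C': "C' \<subseteq> C" "finite C'" "sphere 0 1 \<times> sphere 0 1 \<subseteq> (\<Union>c\<in>C'. U c)"
    using compactE_image[OF cK opn cov] by blast
  define r where "r = Min (insert 1 (snd ` C'))"
  have fin: "finite (insert 1 (snd ` C'))" using C' by simp
  have rpos: "r > 0"
  proof -
    have "\<forall>e\<in>insert 1 (snd ` C'). 0 < e" using C' by (auto simp: C_def)
    then show ?thesis unfolding r_def using fin Min_in[OF fin] by blast
  qed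
  have "\<exists>\<phi>\<in>S. r \<le> x \<bullet> (\<phi> *v a)" if a: "a \<in> sphere 0 1" and x: "x \<in> sphere 0 1" for a x
  proof -
    have "(a, x) \<in> (\<Union>c\<in>C'. U c)" using C'(3) a x by blast
    then obtain \<phi> e where ce: "(\<phi>, e) \<in> C'" "(a, x) \<in> U (\<phi>, e)" by auto
    then have "\<phi> \<in> S" using C' by (auto simp: C_def)
    moreover have "r \<le> e" unfolding r_def using fin ce(1) by (intro Min_le) force+
    moreover have "e < x \<bullet> (\<phi> *v a)" using ce(2) by (simp add: U_def)
    ultimately show ?thesis by (meson less_imp_le order_trans)
  qed
  then show ?thesis using rpos by blast
qed


lemma sm_space: "space (sphere_measure :: ('a::euclidean_space) measure) = sphere 0 1"
  by (simp add: sphere_measure_def space_restrict_space)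

lemma sm_sets: "sets (sphere_measure :: ('a::euclidean_space) measure) = sets (restrict_space borel (sphere 0 1))"
  by (simp add: sphere_measure_def)

lemma sm_emeasure:
  "emeasure (sphere_measure :: ('a::euclidean_space) measure) (sphere 0 1)
     = emeasure lborel (ball (0::'a) 1 - {0})"
proof -
  let ?B = "ball (0::'a) 1 - {0}"
  let ?g = "\<lambda>x::'a. x /\<^sub>R norm x"
  have m0: "?g \<in> borel_measurable borel" by measurable
  have m1: "?g \<in> measurable (restrict_space lborel ?B) borel"
    by (rule measurable_restrict_space1) (use m0 in simp)
  have m: "?g \<in> measurable (restrict_space lborel ?B) (restrict_space borel (sphere 0 1))"
    by (rule measurable_restrict_space2[OF _ m1]) (auto simp: space_restrict_space)
  have sp: "sphere (0::'a) 1 \<in> sets (restrict_space borel (sphere 0 1))"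
    by (simp add: sets_restrict_space_iff)
  have "emeasure (sphere_measure :: 'a measure) (sphere 0 1)
      = emeasure (restrict_space lborel ?B) (?g -` sphere 0 1 \<inter> space (restrict_space lborel ?B))"
    unfolding sphere_measure_def by (rule emeasure_distr[OF m sp])
  also have "?g -` sphere 0 1 \<inter> space (restrict_space lborel ?B) = ?B"
    by (auto simp: space_restrict_space)
  also have "emeasure (restrict_space lborel ?B) ?B = emeasure lborel ?B"
    by (rule emeasure_restrict_space) auto
  finally show ?thesis .
qed

lemma sm_fin_pos:
  "0 < emeasure (sphere_measure :: ('a::euclidean_space) measure) (sphere 0 1)
   \<and> emeasure (sphere_measure :: 'a measure) (sphere 0 1) < \<infinity>"
proof -
  have e: "emeasure lborel (ball (0::'a) 1 - {0}) = emeasure lborel (ball (0::'a) 1)"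
    by (rule emeasure_Diff_null_set) auto
  have fin: "emeasure lborel (ball (0::'a) 1) < \<infinity>" by (rule emeasure_lborel_ball_finite)
  then have "emeasure lborel (ball (0::'a) 1) = ennreal (measure lborel (ball (0::'a) 1))"
    by (intro emeasure_eq_ennreal_measure) simp
  moreover have "measure lborel (ball (0::'a) 1) > 0" by simp
  ultimately have "emeasure lborel (ball (0::'a) 1) > 0" by simp
  then show ?thesis using fin e sm_emeasure by metis
qed


theorem lemma3p2:
  fixes S :: "(real^'n^'n) set"
  assumes "CARD('n) \<ge> 2"
    and "discrete_subgroup_O S"
    and "spanning_property S"
  shows "\<exists>C>0. \<forall>(p::real) (f::real^'n \<Rightarrow> real) (c1::real) (c2::real) \<Omega>.
           p < 0 \<longrightarrow> 0 < c1 \<longrightarrow>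
           f \<in> borel_measurable (restrict_space borel (sphere 0 1)) \<longrightarrow>
           (\<forall>x\<in>sphere 0 1. 0 < f x \<and> c1 \<le> f x \<and> f x \<le> c2) \<longrightarrow>
           (\<forall>\<phi>\<in>S. \<forall>x\<in>sphere 0 1. f (\<phi> *v x) = f x) \<longrightarrow>
           \<Omega> \<in> Kp S f p \<longrightarrow>
           (\<forall>x\<in>sphere 0 1. support_fun \<Omega> x \<le> C)"
proof -
  obtain r0 where r0: "r0 > 0"
    and hr: "\<forall>a\<in>sphere (0::real^'n) 1. \<forall>x\<in>sphere 0 1. \<exists>\<phi>\<in>S. r0 \<le> x \<bullet> (\<phi> *v a)"
    using uniform_pos[OF assms(2,3)] by blast
  have main: "support_fun \<Omega> x \<le> 1 / r0"
    if p: "p < 0" and c1: "0 < c1" and fm: "f \<in> borel_measurable (restrict_space borel (sphere 0 1))"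
      and fb: "\<forall>x\<in>sphere 0 1. 0 < f x \<and> c1 \<le> f x \<and> f x \<le> c2"
      and \<Omega>: "\<Omega> \<in> Kp S f p" and x: "x \<in> sphere (0::real^'n) 1"
    for p f c1 c2 \<Omega> x
  proof (rule ccontr)
    assume "\<not> support_fun \<Omega> x \<le> 1 / r0"
    then have gt: "1 / r0 < support_fun \<Omega> x" by simp
    have K0: "\<Omega> \<in> K0 S" and eqI:
      "(\<integral>\<^sup>+ x. ennreal (f x) * pow_neg p (support_fun \<Omega> x) \<partial>sphere_measure)
         = (\<integral>\<^sup>+ x. ennreal (f x) \<partial>sphere_measure)"
      using \<Omega> unfolding Kp_def by auto
    have cb: "convex_body \<Omega>" and z\<Omega>: "0 \<in> \<Omega>" and inv: "\<forall>\<phi>\<in>S. (\<lambda>x. \<phi> *v x) ` \<Omega> = \<Omega>"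
      using K0 unfolding K0_def by auto
    have "bounded \<Omega>" using cb unfolding convex_body_def by (auto intro: compact_imp_bounded)
    then obtain B where B: "\<forall>y\<in>\<Omega>. norm y \<le> B" by (auto simp: bounded_iff)
    have bdd: "bdd_above ((\<lambda>y. z \<bullet> y) ` \<Omega>)" for z
    proof (rule bdd_aboveI2)
      fix y assume "y \<in> \<Omega>"
      then have "norm y \<le> B" using B by blast
      then show "z \<bullet> y \<le> norm z * B"
        by (meson norm_cauchy_schwarz mult_left_mono norm_ge_zero order_trans)
    qed
    have ne: "\<Omega> \<noteq> {}" using z\<Omega> by blast
    obtain y where y: "y \<in> \<Omega>" "1 / r0 < x \<bullet> y"
      using gt less_cSUP_iff[OF ne bdd] unfolding support_fun_def by blast
    have "x \<bullet> y \<le> norm y" using norm_cauchy_schwarz[of x y] x by simp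
    define R where "R = norm y"
    have R: "1 / r0 < R" using y \<open>x \<bullet> y \<le> norm y\<close> R_def by linarith
    have Rpos: "R > 0" using R r0 by (smt (verit) divide_pos_pos)
    define a where "a = y /\<^sub>R R"
    have a: "a \<in> sphere 0 1" using Rpos by (simp add: a_def R_def)
    have ya: "y = R *\<^sub>R a" using Rpos by (simp add: a_def)
    define t where "t = R * r0"
    have t1: "t > 1" using R r0 by (simp add: t_def field_simps)
    have hz: "t \<le> support_fun \<Omega> z" if z: "z \<in> sphere 0 1" for z
    proof -
      obtain \<phi> where \<phi>: "\<phi> \<in> S" "r0 \<le> z \<bullet> (\<phi> *v a)" using hr a z by blast
      have "\<phi> *v y \<in> \<Omega>" using inv \<phi>(1) y(1) by blast
      have "z \<bullet> (\<phi> *v y) = R * (z \<bullet> (\<phi> *v a))"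
        by (simp add: ya linear.scaleR[OF matrix_vector_mul_linear[of \<phi>]])
      also have "\<dots> \<ge> t" using \<phi>(2) Rpos by (simp add: t_def)
      finally have "t \<le> z \<bullet> (\<phi> *v y)" .
      also have "\<dots> \<le> support_fun \<Omega> z"
        unfolding support_fun_def by (rule cSUP_upper[OF \<open>\<phi> *v y \<in> \<Omega>\<close> bdd])
      finally show ?thesis .
    qed
    define q where "q = t powr p"
    have q1: "q < 1" using powr_less_one[OF t1 p] q_def by simp
    have q0: "q \<ge> 0" by (simp add: q_def)
    have pw: "pow_neg p (support_fun \<Omega> z) \<le> ennreal q" if z: "z \<in> sphere 0 1" for z
    proof -
      have "support_fun \<Omega> z \<ge> t" using hz[OF z] .
      then have nz: "support_fun \<Omega> z \<noteq> 0" "support_fun \<Omega> z > 0" using t1 by auto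
      have "support_fun \<Omega> z powr p \<le> t powr p"
        by (rule powr_mono2') (use p t1 \<open>support_fun \<Omega> z \<ge> t\<close> in auto)
      then show ?thesis using nz by (simp add: pow_neg_def q_def)
    qed
    define I where "I = (\<integral>\<^sup>+ x. ennreal (f x) \<partial>(sphere_measure :: (real^'n) measure))"
    have fm': "(\<lambda>x. ennreal (f x)) \<in> borel_measurable (sphere_measure :: (real^'n) measure)"
    proof -
      have "(\<lambda>x. ennreal (f x)) \<in> borel_measurable (restrict_space borel (sphere (0::real^'n) 1))"
        using fm by measurable
      then show ?thesis by (subst measurable_cong_sets[OF sm_sets refl])
    qed
    have "I \<le> (\<integral>\<^sup>+ x. ennreal (f x) * ennreal q \<partial>sphere_measure)"
      unfolding I_def eqI[symmetric]
      by (rule nn_integral_mono) (use pw in \<open>auto simp: sm_space intro: mult_left_mono\<close>)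
    also have "\<dots> = I * ennreal q" unfolding I_def by (rule nn_integral_multc[OF fm'])
    finally have Ile: "I \<le> I * ennreal q" .
    let ?m = "emeasure (sphere_measure :: (real^'n) measure) (sphere 0 1)"
    have "I \<ge> (\<integral>\<^sup>+ x. ennreal c1 \<partial>(sphere_measure :: (real^'n) measure))"
      unfolding I_def by (rule nn_integral_mono) (use fb in \<open>auto simp: sm_space intro!: ennreal_leI\<close>)
    then have Ige: "I \<ge> ennreal c1 * ?m" by (simp add: sm_space)
    have "I \<le> (\<integral>\<^sup>+ x. ennreal c2 \<partial>(sphere_measure :: (real^'n) measure))"
      unfolding I_def by (rule nn_integral_mono) (use fb in \<open>auto simp: sm_space intro!: ennreal_leI\<close>)
    then have Ile2: "I \<le> ennreal c2 * ?m" by (simp add: sm_space)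
    have mfp: "0 < ?m" "?m < \<infinity>" using sm_fin_pos by auto
    have "0 < ennreal c1 * ?m" using c1 mfp by (simp add: ennreal_zero_less_mult_iff)
    then have Ipos: "I > 0" using Ige by (rule less_le_trans)
    have "ennreal c2 * ?m < \<infinity>" using mfp by (simp add: ennreal_mult_less_top)
    then have Ifin: "I < \<infinity>" using Ile2 by (rule le_less_trans[rotated])
    obtain Ir where Ir: "I = ennreal Ir" "Ir \<ge> 0" using Ifin by (cases I) auto
    have "Ir > 0" using Ipos Ir by simp
    have "ennreal Ir \<le> ennreal (Ir * q)" using Ile Ir q0 by (simp add: ennreal_mult)
    then have "Ir \<le> Ir * q" using Ir q0 by (simp add: ennreal_le_iff)
    then show False using \<open>Ir > 0\<close> q1 by (smt (verit) mult_le_cancel_left1)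
  qed
  show ?thesis
    by (rule exI[of _ "1 / r0"]) (use r0 main in auto)
qed

end
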